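(* Let $m,n\ge1$ and let $F\subseteq\{1,\dots,m\}\times\{1,\dots,n\}$ be a binary image with row sums $(r_1,\dots,r_m)$ and column sums $(c_1,\dots,c_n)$ (no assumption on $r_1$ or $r_m$). Let $L_h(F)$ be the length of the horizontal boundary of $F$. Define $b_i=\#\{j:c_j\ge i\}$ and $d_i=b_i-r_i$ for $i=1,\dots,m$, and set $d_0=d_{m+1}=0$. Let $k$ be an integer with $1\le k\le m$ such that $d_k<0$ and $d_{k+1}\ge0$, and let $\sigma=\sum_{i=1}^k d_i$. Then for all integers $t,s\ge0$, every set of indices $\{i_1<\dots<i_{2t+1}\}\subseteq\{0,1,\dots,k,m+1\}$ and every set of indices $\{\tilde i_1<\dots<\tilde i_{2s+1}\}\subseteq\{0,k+1,k+2,\dots,m+1\}$, \[ L_h(F)\ \ge\ 2r_1+\big(d_{i_1}-d_{i_2}+d_{i_3}-\cdots-d_{i_{2t}}+2d_{i_{2t+1}}\big)+\big(d_{\tilde i_1}-d_{\tilde i_2}+d_{\tilde i_3}-\cdots-d_{\tilde i_{2s}}+2d_{\tilde i_{2s+1}}\big)-\sigma. \]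
   Context: A binary image is a finite set $F\subseteq\mathbb Z^2$; point $(i,j)$ lies in row $i$ and column $j$. The row sum $r_i$ is the number of points of $F$ in row $i$, and the column sum $c_j$ is the number of points of $F$ in column $j$. The horizontal boundary of $F$ is the set of ordered pairs of points $((i,j),(i',j))$ of $\mathbb Z^2$ with $|i-i'|=1$, $(i,j)\in F$ and $(i',j)\notin F$; its length is the number of such pairs. *)

theory Defs
  imports Main
begin

definition row_sum :: "(int \<times> int) set \<Rightarrow> int \<Rightarrow> nat" where
  "row_sum F i = card {j. (i, j) \<in> F}"

definition col_sum :: "(int \<times> int) set \<Rightarrow> int \<Rightarrow> nat" where
  "col_sum F j = card {i. (i, j) \<in> F}"

definition hboundary :: "(int \<times> int) set \<Rightarrow> ((int \<times> int) \<times> (int \<times> int)) set" where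
  "hboundary F = {((i, j), (i', j)) | i j i'. \<bar>i - i'\<bar> = 1 \<and> (i, j) \<in> F \<and> (i', j) \<notin> F}"

definition hboundary_length :: "(int \<times> int) set \<Rightarrow> nat" where
  "hboundary_length F = card (hboundary F)"

definition bseq :: "(int \<times> int) set \<Rightarrow> int \<Rightarrow> int \<Rightarrow> nat" where
  "bseq F n i = card {j \<in> {1..n}. int (col_sum F j) \<ge> i}"

text \<open>d_i = b_i - r_i for 1 <= i <= m, and d_i = 0 otherwise (in particular d_0 = d_{m+1} = 0;
  only indices in 0..m+1 are ever used).\<close>
definition dseq :: "(int \<times> int) set \<Rightarrow> int \<Rightarrow> int \<Rightarrow> int \<Rightarrow> int" where
  "dseq F m n i = (if 1 \<le> i \<and> i \<le> m then int (bseq F n i) - int (row_sum F i) else 0)"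

definition alt_sum :: "(int \<Rightarrow> int) \<Rightarrow> (nat \<Rightarrow> int) \<Rightarrow> nat \<Rightarrow> int" where
  "alt_sum d idx t = (\<Sum>l = 1..2 * t. (-1) ^ (l + 1) * d (idx l)) + 2 * d (idx (2 * t + 1))"

end

theory Submission
  imports Defs
begin


definition fpot :: "int \<Rightarrow> bool \<Rightarrow> bool \<Rightarrow> int \<Rightarrow> int" where
  "fpot xv t act eb = (if \<not> act then (if xv = 1 then 1 else 2 * eb)
     else if t then (if xv = 1 then 1 - eb else 1 + eb)
     else (if xv = 1 then -1 else eb))"

definition gpot :: "int \<Rightarrow> bool \<Rightarrow> bool \<Rightarrow> int \<Rightarrow> int" where
  "gpot xv t zp eb = (if \<not> zp then (if xv = 1 then 1 - eb else (if t then 0 else eb))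
     else if t then (if xv = 1 then 1 - eb else 1)
     else (if xv = 1 then -1 - eb else eb))"

definition Rpot :: "int \<Rightarrow> int \<Rightarrow> int \<Rightarrow> int \<Rightarrow> int \<Rightarrow> int \<Rightarrow> int \<Rightarrow> int \<Rightarrow> int" where
  "Rpot c k m P Q N xv E = (let eb = (if E > 0 then 1 else 0) in
     if N = 0 \<or> N = m + 1 then 0
     else if N < k then fpot xv (N \<le> c) (N < P) eb - E
     else if N = k then gpot xv (N \<le> c) (N < P) eb
     else fpot xv (N \<le> c) (N < Q) eb)"

definition ee :: "int \<Rightarrow> int \<Rightarrow> int \<Rightarrow> int" where
  "ee c N xv = (if 1 \<le> N \<and> N \<le> c then 1 else 0) - xv"

definition tpot :: "int \<Rightarrow> int \<Rightarrow> int \<Rightarrow> int \<Rightarrow> int \<Rightarrow> int \<Rightarrow> int \<Rightarrow> int" where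
  "tpot c k P Q N x0 x1 = (let e0 = ee c N x0; e1 = ee c (N+1) x1;
      vI0 = (if N \<le> k then e0 else 0); vI1 = (if N + 1 \<le> k then e1 else 0);
      vJ0 = (if k < N then e0 else 0); vJ1 = (if k < N + 1 then e1 else 0) in
      \<bar>x0 - x1\<bar>
      - (if N < P then max 0 (vI1 - vI0) + (vI1 - vI0) else 0)
      - (if N < Q then max 0 (vJ1 - vJ0) + (vJ1 - vJ0) else 0)
      + (if N < k then e1 else 0) - (if N = 0 then 2 * x1 else 0))"

lemma step_pot:
  fixes c k m P Q N x0 x1 E :: int
  assumes "0 \<le> N" "N \<le> m" "0 \<le> c" "c \<le> m" "1 \<le> k" "k \<le> m"
    "(1 \<le> P \<and> P < k) \<or> P = m + 1" "k + 1 \<le> Q" "Q \<le> m + 1"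
    "x0 = 0 \<or> x0 = 1" "x1 = 0 \<or> x1 = 1" "N = 0 \<Longrightarrow> x0 = 0" "N = m \<Longrightarrow> x1 = 0"
    "0 \<le> E" "0 \<le> E + ee c (N+1) x1" "N = m \<Longrightarrow> E + ee c (N+1) x1 = 0" "N = 0 \<Longrightarrow> E = 0"
  shows "Rpot c k m P Q N x0 E - Rpot c k m P Q (N+1) x1 (E + ee c (N+1) x1) \<le> tpot c k P Q N x0 x1"
  using assms(11,10)
  apply (elim disjE)
  using assms
  apply (auto simp: Rpot_def tpot_def ee_def fpot_def gpot_def Let_def split: if_splits)
  apply (insert assms(1), cases "N = 0", simp_all, arith)+
  done




lemma sum_int_split:
  fixes f :: "int \<Rightarrow> 'a::comm_monoid_add"
  assumes "a \<le> b" "b \<le> c"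
  shows "sum f {a..<c} = sum f {a..<b} + sum f {b..<c}"
proof -
  have "{a..<c} = {a..<b} \<union> {b..<c}" using assms by auto
  moreover have "{a..<b} \<inter> {b..<c} = {}" by auto
  ultimately show ?thesis by (simp add: sum.union_disjoint)
qed

lemma sum_int_telescope:
  fixes f :: "int \<Rightarrow> int"
  assumes "a \<le> b"
  shows "(\<Sum>i\<in>{a..<b}. f (i+1) - f i) = f b - f a"
  using assms
proof (induct b rule: int_ge_induct)
  case base then show ?case by simp
next
  case (step i)
  have "{a..<i+1} = insert i {a..<i}" using step by auto
  then show ?case using step by simp
qed

definition Up :: "(int \<Rightarrow> int) \<Rightarrow> int \<Rightarrow> int \<Rightarrow> int" where
  "Up v a b = (\<Sum>i\<in>{a..<b}. max 0 (v (i+1) - v i))"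

lemma Up_nonneg: "0 \<le> Up v a b"
  unfolding Up_def by (rule sum_nonneg) simp

lemma Up_split: "a \<le> b \<Longrightarrow> b \<le> c \<Longrightarrow> Up v a c = Up v a b + Up v b c"
  unfolding Up_def by (rule sum_int_split)

lemma Up_mono: "a \<le> b \<Longrightarrow> b \<le> c \<Longrightarrow> Up v a b \<le> Up v a c"
  using Up_split[of a b c v] Up_nonneg[of v b c] by simp

lemma diff_le_Up: "a \<le> b \<Longrightarrow> v b - v a \<le> Up v a b"
proof -
  assume "a \<le> b"
  then have "v b - v a = (\<Sum>i\<in>{a..<b}. v (i+1) - v i)" by (simp add: sum_int_telescope)
  also have "\<dots> \<le> Up v a b" unfolding Up_def by (rule sum_mono) simp
  finally show ?thesis .
qed

lemma chain_bound:
  fixes v :: "int \<Rightarrow> int" and I :: "nat \<Rightarrow> int"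
  assumes "strict_mono_on {1..2*t+1} I" "\<forall>l\<in>{1..2*t+1}. a \<le> I l"
  shows "(\<Sum>l = 1..2 * t. (-1) ^ (l + 1) * v (I l)) + v (I (2*t+1)) \<le> v a + Up v a (I (2*t+1))"
  using assms
proof (induct t)
  case 0
  then show ?case using diff_le_Up[of a "I 1" v] by simp
next
  case (Suc t)
  have sm: "strict_mono_on {1..2*t+1} I"
    using Suc.prems(1) by (rule monotone_on_subset) auto
  have IH: "(\<Sum>l = 1..2 * t. (-1) ^ (l + 1) * v (I l)) + v (I (2*t+1)) \<le> v a + Up v a (I (2*t+1))"
    using Suc.hyps[OF sm] Suc.prems(2) by auto
  have l1: "I (2*t+1) < I (2*t+2)"
    using Suc.prems(1) by (auto simp: strict_mono_on_def)
  have l2: "I (2*t+2) < I (2*t+3)"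
    using Suc.prems(1) by (auto simp: strict_mono_on_def)
  have a1: "a \<le> I (2*t+1)" using Suc.prems(2) by auto
  have S: "(\<Sum>l = 1..2 * Suc t. (-1) ^ (l + 1) * v (I l)) =
        (\<Sum>l = 1..2 * t. (-1) ^ (l + 1) * v (I l)) + v (I (2*t+1)) - v (I (2*t+2))"
  proof -
    have "2 * Suc t = Suc (Suc (2*t))" by simp
    then show ?thesis by (simp add: sum.cl_ivl_Suc algebra_simps)
  qed
  have d: "v (I (2*t+3)) - v (I (2*t+2)) \<le> Up v (I (2*t+2)) (I (2*t+3))"
    using diff_le_Up l2 by simp
  have U: "Up v a (I (2*t+3)) = Up v a (I (2*t+1)) + Up v (I (2*t+1)) (I (2*t+2)) + Up v (I (2*t+2)) (I (2*t+3))"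
    using Up_split[of a "I (2*t+1)" "I (2*t+3)" v] Up_split[of "I (2*t+1)" "I (2*t+2)" "I (2*t+3)" v] a1 l1 l2
    by simp
  have e3: "2 * Suc t + 1 = 2*t+3" by simp
  show ?case unfolding e3 S using IH d U Up_nonneg[of v "I (2*t+1)" "I (2*t+2)"] by linarith
qed

lemma alt_sum_bound:
  fixes v :: "int \<Rightarrow> int" and I :: "nat \<Rightarrow> int"
  assumes "strict_mono_on {1..2*t+1} I" "\<forall>l\<in>{1..2*t+1}. a \<le> I l"
  shows "alt_sum v I t \<le> v a + Up v a (I (2*t+1)) + v (I (2*t+1))"
  using chain_bound[OF assms, of v] unfolding alt_sum_def by simp

lemma alt_sum_cong:
  assumes "\<forall>l\<in>{1..2*t+1}. v (I l) = w (I l)"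
  shows "alt_sum v I t = alt_sum w I t"
  using assms unfolding alt_sum_def by (auto intro!: sum.cong)

lemma alt_sum_sum:
  "alt_sum (\<lambda>i. \<Sum>j\<in>S. f j i) I t = (\<Sum>j\<in>S. alt_sum (f j) I t)"
  unfolding alt_sum_def by (simp add: sum_distrib_left sum.distrib sum.swap[of _ S])



lemma PC:
  fixes x :: "int \<Rightarrow> int" and m c k P Q :: int
  assumes x01: "\<And>i. x i = 0 \<or> x i = 1"
    and supp: "\<And>i. i < 1 \<or> m < i \<Longrightarrow> x i = 0"
    and cdef: "c = (\<Sum>i\<in>{1..m}. x i)"
    and k1: "1 \<le> k" and km: "k \<le> m"
    and Pc: "(1 \<le> P \<and> P < k) \<or> P = m + 1" and Q1: "k + 1 \<le> Q" and Q2: "Q \<le> m + 1"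
  defines "vI \<equiv> \<lambda>i. if i \<le> k then ee c i (x i) else 0"
    and "vJ \<equiv> \<lambda>i. if k < i then ee c i (x i) else 0"
  shows "2 * x 1 + (Up vI 0 P + vI P) + (Up vJ 0 Q + vJ Q) - (\<Sum>i\<in>{1..k}. ee c i (x i))
          \<le> (\<Sum>i\<in>{0..m}. \<bar>x i - x (i+1)\<bar>)"
proof -
  define e where "e i = ee c i (x i)" for i
  define E where "E N = (\<Sum>i\<in>{1..N}. e i)" for N
  have m1: "1 \<le> m" using k1 km by simp
  have xnn: "0 \<le> x i" "x i \<le> 1" for i using x01[of i] by auto
  have c0: "0 \<le> c" unfolding cdef by (rule sum_nonneg) (simp add: xnn)
  have cm: "c \<le> m"
  proof -
    have "c \<le> (\<Sum>i\<in>{1..m}. 1)" unfolding cdef by (rule sum_mono) (simp add: xnn)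
    also have "\<dots> = m" using m1 by simp
    finally show ?thesis .
  qed
  have x0: "x 0 = 0" using supp by simp
  have xm: "x (m+1) = 0" using supp by simp
  have E0: "E 0 = 0" unfolding E_def by simp
  have Esuc: "E (N+1) = E N + e (N+1)" if "0 \<le> N" for N
  proof -
    have "{1..N+1} = insert (N+1) {1..N}" using that by auto
    then show ?thesis unfolding E_def by simp
  qed
  have Ele: "E N = (\<Sum>i\<in>{1..N}. 1 - x i)" if "N \<le> c" for N
    unfolding E_def e_def ee_def using that by (intro sum.cong) auto
  have Ege: "E N = c - (\<Sum>i\<in>{1..N}. x i)" if "c \<le> N" for N
  proof -
    have "E N = (\<Sum>i\<in>{1..N}. (if i \<le> c then 1 else 0)) - (\<Sum>i\<in>{1..N}. x i)"
      unfolding E_def e_def ee_def by (simp add: sum_subtractf)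
    also have "(\<Sum>i\<in>{1..N}. (if i \<le> c then 1 else 0::int)) = (\<Sum>i\<in>{1..c}. 1)"
      using that by (intro sum.mono_neutral_cong_right) auto
    also have "\<dots> = c" using c0 by simp
    finally show ?thesis .
  qed
  have sumx_le: "(\<Sum>i\<in>{1..N}. x i) \<le> c" if "N \<le> m + 1" for N
  proof -
    have "(\<Sum>i\<in>{1..N}. x i) \<le> (\<Sum>i\<in>{1..m+1}. x i)"
      using that by (intro sum_mono2) (auto simp: xnn)
    also have "\<dots> = c" unfolding cdef
      proof -
      have "{1..m+1} = insert (m+1) {1..m}" using m1 by auto
      then show "(\<Sum>i\<in>{1..m+1}. x i) = (\<Sum>i\<in>{1..m}. x i)" using xm by simp
    qed
    finally show ?thesis .
  qed
  have Enn: "0 \<le> E N" if "0 \<le> N" "N \<le> m + 1" for N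
  proof (cases "N \<le> c")
    case True then show ?thesis using Ele[OF True] by (simp add: sum_nonneg xnn)
  next
    case False then show ?thesis using Ege[of N] sumx_le[OF that(2)] by simp
  qed
  have Em: "E (m+1) = 0"
  proof -
    have "(\<Sum>i\<in>{1..m+1}. x i) = c" unfolding cdef
      proof -
      have "{1..m+1} = insert (m+1) {1..m}" using m1 by auto
      then show "(\<Sum>i\<in>{1..m+1}. x i) = (\<Sum>i\<in>{1..m}. x i)" using xm by simp
    qed
    then show ?thesis using Ege[of "m+1"] cm by simp
  qed
  define R where "R N = Rpot c k m P Q N (x N) (E N)" for N
  have stepi: "R i - R (i+1) \<le> tpot c k P Q i (x i) (x (i+1))" if "i \<in> {0..m}" for i
  proof -
    have i0: "0 \<le> i" "i \<le> m" using that by auto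
    have EE: "E (i+1) = E i + ee c (i+1) (x (i+1))" using Esuc[OF i0(1)] unfolding e_def .
    show ?thesis unfolding R_def EE
      apply (rule step_pot)
      using i0 c0 cm k1 km Pc Q1 Q2 x01 x0 xm Enn[of i] Enn[of "i+1"] E0 Em EE
      by auto
  qed
  have "0 = R 0 - R (m+1)" unfolding R_def Rpot_def by simp
  also have "\<dots> = (\<Sum>i\<in>{0..<m+1}. R i - R (i+1))"
    using sum_int_telescope[of 0 "m+1" "\<lambda>i. - R i"] m1 by simp
  also have "\<dots> \<le> (\<Sum>i\<in>{0..<m+1}. tpot c k P Q i (x i) (x (i+1)))"
    by (rule sum_mono) (use stepi in auto)
  finally have main: "0 \<le> (\<Sum>i\<in>{0..<m+1}. tpot c k P Q i (x i) (x (i+1)))" .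
  have cutoff: "(\<Sum>i\<in>{0..<m+1}. (if i < B then g i else 0)) = (\<Sum>i\<in>{0..<B}. g i)"
    if "0 \<le> B" "B \<le> m + 1" for B and g :: "int \<Rightarrow> int"
  proof -
    have "(\<Sum>i\<in>{0..<m+1}. (if i < B then g i else 0)) =
       (\<Sum>i\<in>{0..<B}. (if i < B then g i else 0)) + (\<Sum>i\<in>{B..<m+1}. (if i < B then g i else 0))"
      using that by (rule sum_int_split)
    also have "(\<Sum>i\<in>{B..<m+1}. (if i < B then g i else 0)) = 0" by (intro sum.neutral) auto
    also have "(\<Sum>i\<in>{0..<B}. (if i < B then g i else 0)) = (\<Sum>i\<in>{0..<B}. g i)" by (intro sum.cong) auto
    finally show ?thesis by simp
  qed
  have upart: "(\<Sum>i\<in>{0..<m+1}. (if i < B then max 0 (v (i+1) - v i) + (v (i+1) - v i) else 0)) = Up v 0 B + v B"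
    if "0 \<le> B" "B \<le> m + 1" "v 0 = 0" for B and v :: "int \<Rightarrow> int"
    unfolding cutoff[OF that(1,2)] Up_def sum.distrib sum_int_telescope[OF that(1)] using that(3) by simp
  have vI0: "vI 0 = 0" unfolding vI_def ee_def using x0 k1 by simp
  have vJ0: "vJ 0 = 0" unfolding vJ_def using k1 by simp
  have P0: "0 \<le> P" "P \<le> m + 1" using Pc km k1 by auto
  have Q0: "0 \<le> Q" using Q1 k1 by simp
  have epart: "(\<Sum>i\<in>{0..<m+1}. (if i < k then e (i+1) else 0)) = (\<Sum>i\<in>{1..k}. ee c i (x i))"
  proof -
    have "(\<Sum>i\<in>{0..<m+1}. (if i < k then e (i+1) else 0)) = (\<Sum>i\<in>{0..<k}. e (i+1))"
      using k1 km by (intro cutoff) auto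
    also have "\<dots> = (\<Sum>i\<in>{0..<k}. E (i+1) - E i)" by (intro sum.cong) (auto simp: Esuc)
    also have "\<dots> = E k - E 0" using k1 by (intro sum_int_telescope) simp
    finally show ?thesis unfolding E0 E_def e_def by simp
  qed
  have zpart: "(\<Sum>i\<in>{0..<m+1}. (if i = 0 then 2 * x (i+1) else 0)) = 2 * x 1"
    using m1 by (simp add: sum.delta)
  have tp: "tpot c k P Q i (x i) (x (i+1)) = \<bar>x i - x (i+1)\<bar>
      - (if i < P then max 0 (vI (i+1) - vI i) + (vI (i+1) - vI i) else 0)
      - (if i < Q then max 0 (vJ (i+1) - vJ i) + (vJ (i+1) - vJ i) else 0)
      + (if i < k then e (i+1) else 0) - (if i = 0 then 2 * x (i+1) else 0)" for i
    by (simp add: tpot_def vI_def vJ_def e_def Let_def)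
  have "(\<Sum>i\<in>{0..<m+1}. tpot c k P Q i (x i) (x (i+1))) =
     (\<Sum>i\<in>{0..<m+1}. \<bar>x i - x (i+1)\<bar>)
      - (\<Sum>i\<in>{0..<m+1}. (if i < P then max 0 (vI (i+1) - vI i) + (vI (i+1) - vI i) else 0))
      - (\<Sum>i\<in>{0..<m+1}. (if i < Q then max 0 (vJ (i+1) - vJ i) + (vJ (i+1) - vJ i) else 0))
      + (\<Sum>i\<in>{0..<m+1}. (if i < k then e (i+1) else 0))
      - (\<Sum>i\<in>{0..<m+1}. (if i = 0 then 2 * x (i+1) else 0))"
    unfolding tp by (simp add: sum.distrib sum_subtractf)
  also have "\<dots> = (\<Sum>i\<in>{0..<m+1}. \<bar>x i - x (i+1)\<bar>) - (Up vI 0 P + vI P) - (Up vJ 0 Q + vJ Q)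
      + (\<Sum>i\<in>{1..k}. ee c i (x i)) - 2 * x 1"
    unfolding upart[of P vI, OF P0 vI0] upart[of Q vJ, OF Q0 Q2 vJ0] epart zpart ..
  finally have "0 \<le> (\<Sum>i\<in>{0..<m+1}. \<bar>x i - x (i+1)\<bar>) - (Up vI 0 P + vI P) - (Up vJ 0 Q + vJ Q)
      + (\<Sum>i\<in>{1..k}. ee c i (x i)) - 2 * x 1" using main by simp
  moreover have "{0..<m+1} = {0..m}" by auto
  ultimately show ?thesis by simp
qed


lemma col_bound:
  fixes x :: "int \<Rightarrow> int" and m c k :: int and t s :: nat and I J :: "nat \<Rightarrow> int"
  assumes x01: "\<And>i. x i = 0 \<or> x i = 1"
    and supp: "\<And>i. i < 1 \<or> m < i \<Longrightarrow> x i = 0"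
    and cdef: "c = (\<Sum>i\<in>{1..m}. x i)"
    and k1: "1 \<le> k" and km: "k \<le> m"
    and smI: "strict_mono_on {1..2 * t + 1} I"
    and rI: "I ` {1..2 * t + 1} \<subseteq> {0..k} \<union> {m + 1}"
    and smJ: "strict_mono_on {1..2 * s + 1} J"
    and rJ: "J ` {1..2 * s + 1} \<subseteq> {0} \<union> {k + 1..m + 1}"
  shows "2 * x 1 + (alt_sum (\<lambda>i. ee c i (x i)) I t - (if I (2*t+1) = k then ee c k (x k) else 0))
     + alt_sum (\<lambda>i. ee c i (x i)) J s - (\<Sum>i\<in>{1..k}. ee c i (x i))
     \<le> (\<Sum>i\<in>{0..m}. \<bar>x i - x (i+1)\<bar>)"
proof -
  define e where "e i = ee c i (x i)" for i
  define vI where "vI = (\<lambda>i. if i \<le> k then ee c i (x i) else 0)"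
  define vJ where "vJ = (\<lambda>i. if k < i then ee c i (x i) else 0)"
  have m1: "1 \<le> m" using k1 km by simp
  have xnn: "0 \<le> x i" "x i \<le> 1" for i using x01[of i] by auto
  have cm: "c \<le> m"
  proof -
    have "c \<le> (\<Sum>i\<in>{1..m}. 1)" unfolding cdef by (rule sum_mono) (simp add: xnn)
    also have "\<dots> = m" using m1 by simp
    finally show ?thesis .
  qed
  have x0: "x 0 = 0" using supp by simp
  have xm: "x (m+1) = 0" using supp by simp
  have em: "e (m+1) = 0" unfolding e_def ee_def using xm cm by simp
  have vI0: "vI 0 = 0" unfolding vI_def ee_def using x0 k1 by simp
  have vJ0: "vJ 0 = 0" unfolding vJ_def using k1 by simp
  have vIm: "vI (m+1) = 0" unfolding vI_def using km by simp
  have vJm: "vJ (m+1) = 0" unfolding vJ_def using km em[unfolded e_def] by simp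
  define P where "P = I (2*t+1)"
  define Q where "Q = J (2*s+1)"
  have "I (2*t+1) \<in> I ` {1..2*t+1}" by (rule imageI) simp
  then have Pin: "P \<in> {0..k} \<union> {m+1}" unfolding P_def using rI by blast
  have "J (2*s+1) \<in> J ` {1..2*s+1}" by (rule imageI) simp
  then have Qin: "Q \<in> {0} \<union> {k+1..m+1}" unfolding Q_def using rJ by blast
  have altI: "alt_sum e I t = alt_sum vI I t"
  proof (rule alt_sum_cong, rule ballI)
    fix l assume "l \<in> {1..2*t+1}"
    then have "I l \<in> {0..k} \<union> {m+1}" using rI by blast
    then show "e (I l) = vI (I l)" using em km unfolding vI_def e_def by auto
  qed
  have altJ: "alt_sum e J s = alt_sum vJ J s"
  proof (rule alt_sum_cong, rule ballI)
    fix l assume "l \<in> {1..2*s+1}"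
    then have "J l \<in> {0} \<union> {k+1..m+1}" using rJ by blast
    then show "e (J l) = vJ (J l)" using x0 k1 unfolding vJ_def e_def ee_def by auto
  qed
  have Inn: "\<forall>l\<in>{1..2*t+1}. 0 \<le> I l"
  proof
    fix l assume "l \<in> {1..2*t+1}"
    then have "I l \<in> {0..k} \<union> {m+1}" using rI by blast
    then show "0 \<le> I l" using km k1 by auto
  qed
  have Jnn: "\<forall>l\<in>{1..2*s+1}. 0 \<le> J l"
  proof
    fix l assume "l \<in> {1..2*s+1}"
    then have "J l \<in> {0} \<union> {k+1..m+1}" using rJ by blast
    then show "0 \<le> J l" using km k1 by auto
  qed
  have bI: "alt_sum vI I t \<le> vI 0 + Up vI 0 P + vI P"
    unfolding P_def by (rule alt_sum_bound[OF smI Inn])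
  have bJ: "alt_sum vJ J s \<le> vJ 0 + Up vJ 0 Q + vJ Q"
    unfolding Q_def by (rule alt_sum_bound[OF smJ Jnn])
  define P' where "P' = (if 1 \<le> P \<and> P < k then P else m + 1)"
  define Q' where "Q' = (if Q = 0 then m + 1 else Q)"
  have bI': "alt_sum e I t - (if P = k then e k else 0) \<le> Up vI 0 P' + vI P'"
  proof -
    consider "1 \<le> P \<and> P < k" | "P = k" | "P = 0" | "P = m + 1" using Pin by force
    then show ?thesis
    proof cases
      case 1 then show ?thesis using bI altI vI0 unfolding P'_def by simp
    next
      case 2
      have "vI k = e k" unfolding vI_def e_def by simp
      moreover have "Up vI 0 k \<le> Up vI 0 (m+1)" using k1 km by (intro Up_mono) auto
      ultimately show ?thesis using bI altI vI0 vIm 2 k1 unfolding P'_def by simp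
    next
      case 3
      have "Up vI 0 0 = 0" unfolding Up_def by simp
      then show ?thesis using bI altI vI0 vIm 3 k1 Up_nonneg[of vI 0 "m+1"] unfolding P'_def by simp
    next
      case 4 then show ?thesis using bI altI vI0 km unfolding P'_def by simp
    qed
  qed
  have bJ': "alt_sum e J s \<le> Up vJ 0 Q' + vJ Q'"
  proof (cases "Q = 0")
    case True
    have "Up vJ 0 0 = 0" unfolding Up_def by simp
    then show ?thesis using bJ altJ vJ0 vJm True Up_nonneg[of vJ 0 "m+1"] unfolding Q'_def by simp
  next
    case False then show ?thesis using bJ altJ vJ0 unfolding Q'_def by simp
  qed
  have pc: "2 * x 1 + (Up vI 0 P' + vI P') + (Up vJ 0 Q' + vJ Q') - (\<Sum>i\<in>{1..k}. ee c i (x i))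
          \<le> (\<Sum>i\<in>{0..m}. \<bar>x i - x (i+1)\<bar>)"
    unfolding vI_def vJ_def
    by (rule PC[OF x01 supp cdef k1 km]) (use Qin km k1 in \<open>auto simp: P'_def Q'_def\<close>)
  show ?thesis using pc bI' bJ' unfolding e_def P_def[symmetric] by simp
qed


lemma card_filter_sum:
  assumes "finite B" "A \<subseteq> B"
  shows "int (card A) = (\<Sum>i\<in>B. if i \<in> A then 1 else 0)"
proof -
  have "(\<Sum>i\<in>B. if i \<in> A then 1 else (0::int)) = (\<Sum>i\<in>{i\<in>B. i \<in> A}. 1)"
    by (rule sum.inter_filter[OF assms(1), symmetric])
  also have "{i\<in>B. i \<in> A} = A" using assms by auto
  finally show ?thesis by simp
qed

lemma hb_bound:
  fixes F :: "(int \<times> int) set" and m n :: int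
  assumes FS: "F \<subseteq> {1..m} \<times> {1..n}" and m1: "0 \<le> m"
  shows "(\<Sum>j\<in>{1..n}. \<Sum>i\<in>{0..m}. \<bar>(if (i,j) \<in> F then 1 else 0) - (if (i+1,j) \<in> F then 1 else 0)\<bar>)
         \<le> int (hboundary_length F)"
proof -
  define T where "T = {p \<in> {0..m} \<times> {1..n}. (p \<in> F) \<noteq> ((fst p + 1, snd p) \<in> F)}"
  define g where "g = (\<lambda>p::int\<times>int. if p \<in> F then (p, (fst p + 1, snd p)) else ((fst p + 1, snd p), p))"
  have fin: "finite (hboundary F)"
  proof (rule finite_subset)
    show "hboundary F \<subseteq> F \<times> ({0..m+1} \<times> {1..n})"
      unfolding hboundary_def using FS by (auto simp: abs_if split: if_splits)
    show "finite (F \<times> ({0..m+1} \<times> {1..n}))"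
      using FS by (auto intro: finite_subset)
  qed
  have inj: "inj_on g T"
    unfolding inj_on_def g_def T_def by (auto split: if_splits)
  have img: "g ` T \<subseteq> hboundary F"
    unfolding g_def T_def hboundary_def by (auto split: if_splits)
  have "card T \<le> card (hboundary F)"
    using card_inj_on_le[OF inj img fin] .
  moreover have "int (card T) = (\<Sum>p\<in>{0..m} \<times> {1..n}. if p \<in> T then 1 else 0)"
    by (rule card_filter_sum) (auto simp: T_def)
  moreover have "(\<Sum>p\<in>{0..m} \<times> {1..n}. if p \<in> T then 1 else (0::int)) =
     (\<Sum>j\<in>{1..n}. \<Sum>i\<in>{0..m}. \<bar>(if (i,j) \<in> F then 1 else 0) - (if (i+1,j) \<in> F then 1 else 0)\<bar>)"
  proof -
    have "(\<Sum>j\<in>{1..n}. \<Sum>i\<in>{0..m}. \<bar>(if (i,j) \<in> F then 1 else 0) - (if (i+1,j) \<in> F then 1 else (0::int))\<bar>)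
      = (\<Sum>i\<in>{0..m}. \<Sum>j\<in>{1..n}. \<bar>(if (i,j) \<in> F then 1 else 0) - (if (i+1,j) \<in> F then 1 else (0::int))\<bar>)"
      by (rule sum.swap)
    also have "\<dots> = (\<Sum>(i,j)\<in>{0..m} \<times> {1..n}. \<bar>(if (i,j) \<in> F then 1 else 0) - (if (i+1,j) \<in> F then 1 else (0::int))\<bar>)"
      by (rule sum.cartesian_product)
    also have "\<dots> = (\<Sum>p\<in>{0..m} \<times> {1..n}. if p \<in> T then 1 else (0::int))"
      by (rule sum.cong) (auto simp: T_def)
    finally show ?thesis by simp
  qed
  ultimately show ?thesis unfolding hboundary_length_def by linarith
qed


theorem corollary5p3:
  fixes F :: "(int \<times> int) set" and m n k :: int and t s :: nat
    and I J :: "nat \<Rightarrow> int"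
  assumes "m \<ge> 1" and "n \<ge> 1"
    and "F \<subseteq> {1..m} \<times> {1..n}"
    and "1 \<le> k" and "k \<le> m"
    and "dseq F m n k < 0" and "dseq F m n (k + 1) \<ge> 0"
    and "strict_mono_on {1..2 * t + 1} I"
    and "I ` {1..2 * t + 1} \<subseteq> {0..k} \<union> {m + 1}"
    and "strict_mono_on {1..2 * s + 1} J"
    and "J ` {1..2 * s + 1} \<subseteq> {0} \<union> {k + 1..m + 1}"
  shows "int (hboundary_length F) \<ge>
           2 * int (row_sum F 1) + alt_sum (dseq F m n) I t + alt_sum (dseq F m n) J s
           - (\<Sum>i = 1..k. dseq F m n i)"
proof -
  note FS = assms(3)
  define x where "x j i = (if (i,j) \<in> F then 1 else (0::int))" for j i
  define cc where "cc j = (\<Sum>i\<in>{1..m}. x j i)" for j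
  define e where "e j i = ee (cc j) i (x j i)" for j i
  have x01: "x j i = 0 \<or> x j i = 1" for j i unfolding x_def by simp
  have supp: "i < 1 \<or> m < i \<Longrightarrow> x j i = 0" for i j unfolding x_def using FS by auto
  have suppj: "j < 1 \<or> n < j \<Longrightarrow> x j i = 0" for i j unfolding x_def using FS by auto
  have ccm: "cc j \<le> m" for j
  proof -
    have "cc j \<le> (\<Sum>i\<in>{1..m}. 1)" unfolding cc_def by (rule sum_mono) (simp add: x_def)
    also have "\<dots> = m" using assms(1) by simp
    finally show ?thesis .
  qed
  have colsum: "int (col_sum F j) = cc j" for j
  proof -
    have "int (card {i. (i,j) \<in> F}) = (\<Sum>i\<in>{1..m}. if i \<in> {i. (i,j) \<in> F} then 1 else 0)"
      by (rule card_filter_sum) (use FS in auto)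
    then show ?thesis unfolding col_sum_def cc_def x_def by simp
  qed
  have rowsum: "int (row_sum F i) = (\<Sum>j\<in>{1..n}. x j i)" for i
  proof -
    have "int (card {j. (i,j) \<in> F}) = (\<Sum>j\<in>{1..n}. if j \<in> {j. (i,j) \<in> F} then 1 else 0)"
      by (rule card_filter_sum) (use FS in auto)
    then show ?thesis unfolding row_sum_def x_def by simp
  qed
  have bs: "int (bseq F n i) = (\<Sum>j\<in>{1..n}. if i \<le> cc j then 1 else 0)" for i
  proof -
    have "int (card {j \<in> {1..n}. int (col_sum F j) \<ge> i}) =
        (\<Sum>j\<in>{1..n}. if j \<in> {j \<in> {1..n}. int (col_sum F j) \<ge> i} then 1 else 0)"
      by (rule card_filter_sum) auto
    moreover have "(\<Sum>j\<in>{1..n}. if j \<in> {j \<in> {1..n}. int (col_sum F j) \<ge> i} then 1 else (0::int))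
        = (\<Sum>j\<in>{1..n}. if i \<le> cc j then 1 else 0)"
      by (rule sum.cong) (auto simp: colsum)
    ultimately show ?thesis unfolding bseq_def by simp
  qed
  have dd: "dseq F m n i = (\<Sum>j\<in>{1..n}. e j i)" for i
  proof (cases "1 \<le> i \<and> i \<le> m")
    case True
    then have "dseq F m n i = (\<Sum>j\<in>{1..n}. if i \<le> cc j then 1 else 0) - (\<Sum>j\<in>{1..n}. x j i)"
      unfolding dseq_def bs rowsum by simp
    also have "\<dots> = (\<Sum>j\<in>{1..n}. e j i)" unfolding e_def ee_def sum_subtractf[symmetric]
      using True by (intro sum.cong) auto
    finally show ?thesis .
  next
    case False
    have "e j i = 0" for j unfolding e_def ee_def using False supp[of i j] ccm[of j] by auto
    then show ?thesis using False unfolding dseq_def by auto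
  qed
  have dfun: "dseq F m n = (\<lambda>i. \<Sum>j\<in>{1..n}. e j i)" using dd by (rule ext)
  have col: "2 * x j 1 + (alt_sum (e j) I t - (if I (2*t+1) = k then e j k else 0))
     + alt_sum (e j) J s - (\<Sum>i\<in>{1..k}. e j i) \<le> (\<Sum>i\<in>{0..m}. \<bar>x j i - x j (i+1)\<bar>)" for j
    unfolding e_def
    by (rule col_bound[OF x01 supp cc_def assms(4,5,8,9,10,11)])
  have "(\<Sum>j\<in>{1..n}. 2 * x j 1 + (alt_sum (e j) I t - (if I (2*t+1) = k then e j k else 0))
     + alt_sum (e j) J s - (\<Sum>i\<in>{1..k}. e j i)) \<le> (\<Sum>j\<in>{1..n}. \<Sum>i\<in>{0..m}. \<bar>x j i - x j (i+1)\<bar>)"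
    by (rule sum_mono) (rule col)
  also have "\<dots> \<le> int (hboundary_length F)"
    using hb_bound[OF FS] assms(1) unfolding x_def by simp
  finally have main: "(\<Sum>j\<in>{1..n}. 2 * x j 1 + (alt_sum (e j) I t - (if I (2*t+1) = k then e j k else 0))
     + alt_sum (e j) J s - (\<Sum>i\<in>{1..k}. e j i)) \<le> int (hboundary_length F)" .
  have expand: "(\<Sum>j\<in>{1..n}. 2 * x j 1 + (alt_sum (e j) I t - (if I (2*t+1) = k then e j k else 0))
     + alt_sum (e j) J s - (\<Sum>i\<in>{1..k}. e j i)) =
     2 * int (row_sum F 1) + alt_sum (dseq F m n) I t - (if I (2*t+1) = k then dseq F m n k else 0)
      + alt_sum (dseq F m n) J s - (\<Sum>i = 1..k. dseq F m n i)"
    unfolding dfun alt_sum_sum rowsum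
    by (simp add: sum.distrib sum_subtractf sum_distrib_left sum.swap[of _ "{1..k}"] if_distrib
        cong: if_cong)
  have corr: "(if I (2*t+1) = k then dseq F m n k else 0) \<le> 0" using assms(6) by simp
  show ?thesis using main expand corr by linarith
qed


end
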